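(* For any $n\geq1$ and any abelian group $\mathsf A$, let $\coprod^n\mathsf A$ be the coproduct of $n$ copies of the one-object groupoid $\mathsf A$. Then $$\mathbb{S}ym\big(\textstyle\coprod^n\mathsf A\big)\simeq\mathsf A^n[1]\rtimes(\mathsf S_n\wr\mathsf{Aut}(\mathsf A))[0],$$ where $\mathsf S_n\wr\mathsf{Aut}(\mathsf A)$ acts on $\mathsf A^n$ by $(\sigma,(\phi_1,\dots,\phi_n))\lhd(a_1,\ldots,a_n)=(\phi_{\sigma^{-1}(1)}(a_{\sigma^{-1}(1)}),\ldots,\phi_{\sigma^{-1}(n)}(a_{\sigma^{-1}(n)}))$.
   Context: For a groupoid $\mathcal K$, $\mathbb{S}ym(\mathcal K)$ is the 2-group (monoidal groupoid with weakly invertible objects) of self-equivalences of $\mathcal K$ and natural isomorphisms, with tensor product composition. $\simeq$ denotes equivalence of 2-groups (monoidal functor with pseudo-inverse up to monoidal natural isomorphism). $\mathsf S_n\wr\mathsf H$ is the group $\mathsf S_n\times\mathsf H^n$ with product $(\sigma,\mathbf h)(\sigma',\mathbf h')=(\sigma\sigma',(\mathbf h\rhd\sigma')\mathbf h')$, $\mathbf h\rhd\sigma=(h_{\sigma(1)},\dots,h_{\sigma(n)})$. For a group $\mathsf G$ and left $\mathsf G$-module $\mathsf B$, $\mathsf B[1]\rtimes\mathsf G[0]$ is the strict 2-group with objects the elements of $\mathsf G$, morphisms $(b,g):g\to g$ ($b\in\mathsf B$), composition $(b',g)\circ(b,g)=(b'+b,g)$, tensor $g\otimes g'=gg'$, $(b,g)\otimes(b',g')=(b+g\lhd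 b',gg')$. *)

theory Defs
  imports Main "HOL-Combinatorics.Permutations"
begin

record ('o,'m) cat =
  cOb :: "'o set"
  cAr :: "'m set"
  cdom :: "'m \<Rightarrow> 'o"
  ccod :: "'m \<Rightarrow> 'o"
  ccomp :: "'m \<Rightarrow> 'm \<Rightarrow> 'm"   (* ccomp C g f = g o f, defined when ccod f = cdom g *)
  cid :: "'o \<Rightarrow> 'm"

definition arr_in :: "('o,'m,'x) cat_scheme \<Rightarrow> 'm \<Rightarrow> 'o \<Rightarrow> 'o \<Rightarrow> bool" where
  "arr_in C f a b \<longleftrightarrow> f \<in> cAr C \<and> cdom C f = a \<and> ccod C f = b"

definition is_iso :: "('o,'m,'x) cat_scheme \<Rightarrow> 'm \<Rightarrow> bool" where
  "is_iso C f \<longleftrightarrow> f \<in> cAr C \<and> (\<exists>g. arr_in C g (ccod C f) (cdom C f)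
       \<and> ccomp C g f = cid C (cdom C f) \<and> ccomp C f g = cid C (ccod C f))"

definition category :: "('o,'m,'x) cat_scheme \<Rightarrow> bool" where
  "category C \<longleftrightarrow>
     (\<forall>f\<in>cAr C. cdom C f \<in> cOb C \<and> ccod C f \<in> cOb C)
   \<and> (\<forall>x\<in>cOb C. arr_in C (cid C x) x x)
   \<and> (\<forall>f\<in>cAr C. \<forall>g\<in>cAr C. ccod C f = cdom C g \<longrightarrow>
          arr_in C (ccomp C g f) (cdom C f) (ccod C g))
   \<and> (\<forall>f\<in>cAr C. ccomp C (cid C (ccod C f)) f = f \<and> ccomp C f (cid C (cdom C f)) = f)
   \<and> (\<forall>f\<in>cAr C. \<forall>g\<in>cAr C. \<forall>h\<in>cAr C. ccod C f = cdom C g \<longrightarrow> ccod C g = cdom C h \<longrightarrow>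
          ccomp C h (ccomp C g f) = ccomp C (ccomp C h g) f)"

definition groupoid :: "('o,'m,'x) cat_scheme \<Rightarrow> bool" where
  "groupoid C \<longleftrightarrow> category C \<and> (\<forall>f\<in>cAr C. is_iso C f)"

definition "functor" :: "('o1,'m1,'x) cat_scheme \<Rightarrow> ('o2,'m2,'y) cat_scheme
    \<Rightarrow> ('o1 \<Rightarrow> 'o2) \<Rightarrow> ('m1 \<Rightarrow> 'm2) \<Rightarrow> bool" where
  "functor C D Fo Fm \<longleftrightarrow>
     (\<forall>x\<in>cOb C. Fo x \<in> cOb D)
   \<and> (\<forall>f\<in>cAr C. arr_in D (Fm f) (Fo (cdom C f)) (Fo (ccod C f)))
   \<and> (\<forall>x\<in>cOb C. Fm (cid C x) = cid D (Fo x))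
   \<and> (\<forall>f\<in>cAr C. \<forall>g\<in>cAr C. ccod C f = cdom C g \<longrightarrow>
          Fm (ccomp C g f) = ccomp D (Fm g) (Fm f))"

definition nat_trans :: "('o1,'m1,'x) cat_scheme \<Rightarrow> ('o2,'m2,'y) cat_scheme
    \<Rightarrow> ('o1 \<Rightarrow> 'o2) \<Rightarrow> ('m1 \<Rightarrow> 'm2) \<Rightarrow> ('o1 \<Rightarrow> 'o2) \<Rightarrow> ('m1 \<Rightarrow> 'm2)
    \<Rightarrow> ('o1 \<Rightarrow> 'm2) \<Rightarrow> bool" where
  "nat_trans C D Fo Fm Go Gm \<alpha> \<longleftrightarrow>
     (\<forall>x\<in>cOb C. arr_in D (\<alpha> x) (Fo x) (Go x))
   \<and> (\<forall>f\<in>cAr C. ccomp D (\<alpha> (ccod C f)) (Fm f) = ccomp D (Gm f) (\<alpha> (cdom C f)))"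

definition nat_iso :: "('o1,'m1,'x) cat_scheme \<Rightarrow> ('o2,'m2,'y) cat_scheme
    \<Rightarrow> ('o1 \<Rightarrow> 'o2) \<Rightarrow> ('m1 \<Rightarrow> 'm2) \<Rightarrow> ('o1 \<Rightarrow> 'o2) \<Rightarrow> ('m1 \<Rightarrow> 'm2)
    \<Rightarrow> ('o1 \<Rightarrow> 'm2) \<Rightarrow> bool" where
  "nat_iso C D Fo Fm Go Gm \<alpha> \<longleftrightarrow>
     nat_trans C D Fo Fm Go Gm \<alpha> \<and> (\<forall>x\<in>cOb C. is_iso D (\<alpha> x))"

definition self_equiv :: "('o,'m,'x) cat_scheme \<Rightarrow> ('o \<Rightarrow> 'o) \<Rightarrow> ('m \<Rightarrow> 'm) \<Rightarrow> bool" where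
  "self_equiv C Fo Fm \<longleftrightarrow> functor C C Fo Fm \<and>
     (\<exists>Go Gm \<alpha> \<beta>. functor C C Go Gm
        \<and> nat_iso C C (Go \<circ> Fo) (Gm \<circ> Fm) id id \<alpha>
        \<and> nat_iso C C (Fo \<circ> Go) (Fm \<circ> Gm) id id \<beta>)"

record ('o,'m) smc = "('o,'m) cat" +
  tob :: "'o \<Rightarrow> 'o \<Rightarrow> 'o"
  tar :: "'m \<Rightarrow> 'm \<Rightarrow> 'm"
  unt :: "'o"

definition strict_monoidal :: "('o,'m,'x) smc_scheme \<Rightarrow> bool" where
  "strict_monoidal C \<longleftrightarrow> category C \<and> unt C \<in> cOb C
   \<and> (\<forall>x\<in>cOb C. \<forall>y\<in>cOb C. tob C x y \<in> cOb C)
   \<and> (\<forall>f\<in>cAr C. \<forall>g\<in>cAr C. arr_in C (tar C f g) (tob C (cdom C f) (cdom C g))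
                                              (tob C (ccod C f) (ccod C g)))
   \<and> (\<forall>x\<in>cOb C. \<forall>y\<in>cOb C. tar C (cid C x) (cid C y) = cid C (tob C x y))
   \<and> (\<forall>f\<in>cAr C. \<forall>f'\<in>cAr C. \<forall>g\<in>cAr C. \<forall>g'\<in>cAr C.
        ccod C f = cdom C f' \<longrightarrow> ccod C g = cdom C g' \<longrightarrow>
        tar C (ccomp C f' f) (ccomp C g' g) = ccomp C (tar C f' g') (tar C f g))
   \<and> (\<forall>x\<in>cOb C. \<forall>y\<in>cOb C. \<forall>z\<in>cOb C. tob C (tob C x y) z = tob C x (tob C y z))
   \<and> (\<forall>f\<in>cAr C. \<forall>g\<in>cAr C. \<forall>h\<in>cAr C. tar C (tar C f g) h = tar C f (tar C g h))
   \<and> (\<forall>x\<in>cOb C. tob C (unt C) x = x \<and> tob C x (unt C) = x)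
   \<and> (\<forall>f\<in>cAr C. tar C (cid C (unt C)) f = f \<and> tar C f (cid C (unt C)) = f)"

definition strict_2group :: "('o,'m,'x) smc_scheme \<Rightarrow> bool" where
  "strict_2group C \<longleftrightarrow> strict_monoidal C \<and> groupoid C
   \<and> (\<forall>x\<in>cOb C. \<exists>y\<in>cOb C. (\<exists>f. arr_in C f (tob C x y) (unt C))
                            \<and> (\<exists>g. arr_in C g (tob C y x) (unt C)))"

definition mon_functor :: "('o1,'m1,'x) smc_scheme \<Rightarrow> ('o2,'m2,'y) smc_scheme
    \<Rightarrow> ('o1 \<Rightarrow> 'o2) \<Rightarrow> ('m1 \<Rightarrow> 'm2) \<Rightarrow> ('o1 \<Rightarrow> 'o1 \<Rightarrow> 'm2) \<Rightarrow> 'm2 \<Rightarrow> bool" where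
  "mon_functor C D Fo Fm \<mu> \<epsilon> \<longleftrightarrow> functor C D Fo Fm
   \<and> (\<forall>x\<in>cOb C. \<forall>y\<in>cOb C. arr_in D (\<mu> x y) (tob D (Fo x) (Fo y)) (Fo (tob C x y))
                           \<and> is_iso D (\<mu> x y))
   \<and> arr_in D \<epsilon> (unt D) (Fo (unt C)) \<and> is_iso D \<epsilon>
   \<and> (\<forall>f\<in>cAr C. \<forall>g\<in>cAr C.
        ccomp D (Fm (tar C f g)) (\<mu> (cdom C f) (cdom C g))
        = ccomp D (\<mu> (ccod C f) (ccod C g)) (tar D (Fm f) (Fm g)))
   \<and> (\<forall>x\<in>cOb C. \<forall>y\<in>cOb C. \<forall>z\<in>cOb C.
        ccomp D (\<mu> (tob C x y) z) (tar D (\<mu> x y) (cid D (Fo z)))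
        = ccomp D (\<mu> x (tob C y z)) (tar D (cid D (Fo x)) (\<mu> y z)))
   \<and> (\<forall>x\<in>cOb C. ccomp D (\<mu> (unt C) x) (tar D \<epsilon> (cid D (Fo x))) = cid D (Fo x))
   \<and> (\<forall>x\<in>cOb C. ccomp D (\<mu> x (unt C)) (tar D (cid D (Fo x)) \<epsilon>) = cid D (Fo x))"

definition mon_nat_iso :: "('o1,'m1,'x) smc_scheme \<Rightarrow> ('o2,'m2,'y) smc_scheme
    \<Rightarrow> ('o1 \<Rightarrow> 'o2) \<Rightarrow> ('m1 \<Rightarrow> 'm2) \<Rightarrow> ('o1 \<Rightarrow> 'o1 \<Rightarrow> 'm2) \<Rightarrow> 'm2
    \<Rightarrow> ('o1 \<Rightarrow> 'o2) \<Rightarrow> ('m1 \<Rightarrow> 'm2) \<Rightarrow> ('o1 \<Rightarrow> 'o1 \<Rightarrow> 'm2) \<Rightarrow> 'm2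
    \<Rightarrow> ('o1 \<Rightarrow> 'm2) \<Rightarrow> bool" where
  "mon_nat_iso C D Fo Fm \<mu> \<epsilon> Go Gm \<nu> \<eta> \<theta> \<longleftrightarrow> nat_iso C D Fo Fm Go Gm \<theta>
   \<and> (\<forall>x\<in>cOb C. \<forall>y\<in>cOb C.
        ccomp D (\<theta> (tob C x y)) (\<mu> x y) = ccomp D (\<nu> x y) (tar D (\<theta> x) (\<theta> y)))
   \<and> ccomp D (\<theta> (unt C)) \<epsilon> = \<eta>"

definition equiv_2group :: "('o1,'m1,'x) smc_scheme \<Rightarrow> ('o2,'m2,'y) smc_scheme \<Rightarrow> bool" where
  "equiv_2group C D \<longleftrightarrow> strict_2group C \<and> strict_2group D \<and>
    (\<exists>Fo Fm \<mu> \<epsilon> Go Gm \<nu> \<eta> \<theta> \<kappa>.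
        mon_functor C D Fo Fm \<mu> \<epsilon> \<and> mon_functor D C Go Gm \<nu> \<eta>
      \<and> mon_nat_iso C C (Go \<circ> Fo) (Gm \<circ> Fm)
            (\<lambda>x y. ccomp C (Gm (\<mu> x y)) (\<nu> (Fo x) (Fo y))) (ccomp C (Gm \<epsilon>) \<eta>)
            id id (\<lambda>x y. cid C (tob C x y)) (cid C (unt C)) \<theta>
      \<and> mon_nat_iso D D (Fo \<circ> Go) (Fm \<circ> Gm)
            (\<lambda>x y. ccomp D (Fm (\<nu> x y)) (\<mu> (Go x) (Go y))) (ccomp D (Fm \<eta>) \<epsilon>)
            id id (\<lambda>x y. cid D (tob D x y)) (cid D (unt D)) \<kappa>)"

text \<open>Objects: self-equivalences (Fo, Fm), extensional (undefined off the carriers).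
  Tensor: composition F * G = F o G; on morphisms horizontal composition.\<close>

definition fcomp :: "('o,'m,'x) cat_scheme \<Rightarrow> ('o \<Rightarrow> 'o) \<times> ('m \<Rightarrow> 'm)
     \<Rightarrow> ('o \<Rightarrow> 'o) \<times> ('m \<Rightarrow> 'm) \<Rightarrow> ('o \<Rightarrow> 'o) \<times> ('m \<Rightarrow> 'm)" where
  "fcomp K F G = (\<lambda>x. if x \<in> cOb K then fst F (fst G x) else undefined,
                  \<lambda>f. if f \<in> cAr K then snd F (snd G f) else undefined)"

definition Sym :: "('o,'m,'x) cat_scheme \<Rightarrow>
   (('o \<Rightarrow> 'o) \<times> ('m \<Rightarrow> 'm),
    (('o \<Rightarrow> 'o) \<times> ('m \<Rightarrow> 'm)) \<times> (('o \<Rightarrow> 'o) \<times> ('m \<Rightarrow> 'm)) \<times> ('o \<Rightarrow> 'm)) smc" where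
  "Sym K = \<lparr>
     cOb = {F. self_equiv K (fst F) (snd F)
               \<and> (\<forall>x. x \<notin> cOb K \<longrightarrow> fst F x = undefined)
               \<and> (\<forall>f. f \<notin> cAr K \<longrightarrow> snd F f = undefined)},
     cAr = {(F, G, \<alpha>). self_equiv K (fst F) (snd F)
               \<and> (\<forall>x. x \<notin> cOb K \<longrightarrow> fst F x = undefined)
               \<and> (\<forall>f. f \<notin> cAr K \<longrightarrow> snd F f = undefined)
               \<and> self_equiv K (fst G) (snd G)
               \<and> (\<forall>x. x \<notin> cOb K \<longrightarrow> fst G x = undefined)
               \<and> (\<forall>f. f \<notin> cAr K \<longrightarrow> snd G f = undefined)
               \<and> nat_iso K K (fst F) (snd F) (fst G) (snd G) \<alpha>
               \<and> (\<forall>x. x \<notin> cOb K \<longrightarrow> \<alpha> x = undefined)},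
     cdom = (\<lambda>(F, G, \<alpha>). F),
     ccod = (\<lambda>(F, G, \<alpha>). G),
     ccomp = (\<lambda>(G', H, \<beta>) (F, G, \<alpha>).
                (F, H, \<lambda>x. if x \<in> cOb K then ccomp K (\<beta> x) (\<alpha> x) else undefined)),
     cid = (\<lambda>F. (F, F, \<lambda>x. if x \<in> cOb K then cid K (fst F x) else undefined)),
     tob = fcomp K,
     tar = (\<lambda>(F, F', \<alpha>) (G, G', \<beta>).
              (fcomp K F G, fcomp K F' G',
               \<lambda>x. if x \<in> cOb K then ccomp K (\<alpha> (fst G' x)) (snd F (\<beta> x)) else undefined)),
     unt = (\<lambda>x. if x \<in> cOb K then x else undefined, \<lambda>f. if f \<in> cAr K then f else undefined)
   \<rparr>"

text \<open>Objects 0..n-1; morphisms (i, a) : i -> i for a in A; no morphisms between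
  distinct objects; composition is the group law of A.\<close>
definition coprod_grpd :: "nat \<Rightarrow> (nat, nat \<times> 'a::ab_group_add) cat" where
  "coprod_grpd n = \<lparr>
     cOb = {..<n},
     cAr = {f. fst f < n},
     cdom = fst,
     ccod = fst,
     ccomp = (\<lambda>g f. (fst f, snd g + snd f)),
     cid = (\<lambda>i. (i, 0))
   \<rparr>"

section \<open>The strict 2-group B[1] x| G[0]\<close>

definition semidirect_2group :: "'g set \<Rightarrow> ('g \<Rightarrow> 'g \<Rightarrow> 'g) \<Rightarrow> 'g
    \<Rightarrow> 'b set \<Rightarrow> ('b \<Rightarrow> 'b \<Rightarrow> 'b) \<Rightarrow> 'b \<Rightarrow> ('g \<Rightarrow> 'b \<Rightarrow> 'b) \<Rightarrow> ('g, 'b \<times> 'g) smc" where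
  "semidirect_2group Gc gmul gone Bc badd bzero act = \<lparr>
     cOb = Gc,
     cAr = Bc \<times> Gc,
     cdom = snd,
     ccod = snd,
     ccomp = (\<lambda>(b', g') (b, g). (badd b' b, g)),
     cid = (\<lambda>g. (bzero, g)),
     tob = gmul,
     tar = (\<lambda>(b, g) (b', g'). (badd b (act g b'), gmul g g')),
     unt = gone
   \<rparr>"

definition Aut :: "('a::ab_group_add \<Rightarrow> 'a) set" where
  "Aut = {\<phi>. bij \<phi> \<and> (\<forall>x y. \<phi> (x + y) = \<phi> x + \<phi> y)}"

text \<open>The wreath product S_n wr H, with S_n the permutations of {0..<n},
  H^n as functions nat => H equal to the unit outside {0..<n}.\<close>
definition wreath_car :: "nat \<Rightarrow> 'h set \<Rightarrow> 'h \<Rightarrow> ((nat \<Rightarrow> nat) \<times> (nat \<Rightarrow> 'h)) set" where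
  "wreath_car n Hc hone = {(\<sigma>, h). \<sigma> permutes {..<n} \<and> (\<forall>i<n. h i \<in> Hc) \<and> (\<forall>i\<ge>n. h i = hone)}"

definition wreath_mult :: "('h \<Rightarrow> 'h \<Rightarrow> 'h) \<Rightarrow> (nat \<Rightarrow> nat) \<times> (nat \<Rightarrow> 'h)
    \<Rightarrow> (nat \<Rightarrow> nat) \<times> (nat \<Rightarrow> 'h) \<Rightarrow> (nat \<Rightarrow> nat) \<times> (nat \<Rightarrow> 'h)" where
  "wreath_mult hmul x y = (fst x \<circ> fst y, \<lambda>i. hmul (snd x (fst y i)) (snd y i))"

text \<open>A^n as functions nat => A vanishing outside {0..<n}.\<close>
definition power_car :: "nat \<Rightarrow> (nat \<Rightarrow> 'a::ab_group_add) set" where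
  "power_car n = {a. \<forall>i\<ge>n. a i = 0}"

definition wreath_act :: "nat \<Rightarrow> (nat \<Rightarrow> nat) \<times> (nat \<Rightarrow> 'a \<Rightarrow> 'a)
    \<Rightarrow> (nat \<Rightarrow> 'a::ab_group_add) \<Rightarrow> (nat \<Rightarrow> 'a)" where
  "wreath_act n g a = (\<lambda>i. if i < n then snd g (inv (fst g) i) (a (inv (fst g) i)) else 0)"

definition target_2group :: "nat \<Rightarrow> 'a itself \<Rightarrow>
    ((nat \<Rightarrow> nat) \<times> (nat \<Rightarrow> 'a \<Rightarrow> 'a),
     (nat \<Rightarrow> 'a::ab_group_add) \<times> ((nat \<Rightarrow> nat) \<times> (nat \<Rightarrow> 'a \<Rightarrow> 'a))) smc" where
  "target_2group n _ = semidirect_2group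
     (wreath_car n (Aut :: ('a \<Rightarrow> 'a) set) id) (wreath_mult (\<circ>)) (id, \<lambda>i. id)
     (power_car n) (\<lambda>a b i. a i + b i) (\<lambda>i. 0) (wreath_act n)"

end

theory Submission
  imports Defs
begin


definition hom :: "('o1,'m1,'x) smc_scheme \<Rightarrow> ('o2,'m2,'y) smc_scheme \<Rightarrow> ('o1\<Rightarrow>'o2) \<Rightarrow> ('m1\<Rightarrow>'m2) \<Rightarrow> bool" where
"hom C D F Fm \<longleftrightarrow> (\<forall>x\<in>cOb C. F x \<in> cOb D)
  \<and> (\<forall>f\<in>cAr C. Fm f \<in> cAr D \<and> cdom D (Fm f) = F (cdom C f) \<and> ccod D (Fm f) = F (ccod C f))
  \<and> (\<forall>f\<in>cAr C. \<forall>g\<in>cAr C. ccod C f = cdom C g \<longrightarrow> Fm (ccomp C g f) = ccomp D (Fm g) (Fm f))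
  \<and> (\<forall>x\<in>cOb C. Fm (cid C x) = cid D (F x))
  \<and> (\<forall>x\<in>cOb C. \<forall>y\<in>cOb C. F (tob C x y) = tob D (F x) (F y))
  \<and> (\<forall>f\<in>cAr C. \<forall>g\<in>cAr C. Fm (tar C f g) = tar D (Fm f) (Fm g))
  \<and> F (unt C) = unt D"

lemma transport:
  assumes D: "strict_2group D" and h: "hom D C G Gm"
    and bo: "bij_betw G (cOb D) (cOb C)" and ba: "bij_betw Gm (cAr D) (cAr C)"
  shows "strict_2group C"
proof -
  have obC: "cOb C = G ` cOb D" and arC: "cAr C = Gm ` cAr D"
    using bo ba by (auto simp: bij_betw_def)
  have injo: "\<And>x y. x \<in> cOb D \<Longrightarrow> y \<in> cOb D \<Longrightarrow> G x = G y \<longleftrightarrow> x = y"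
    using bo by (auto simp: bij_betw_def inj_on_def)
  have inja: "\<And>x y. x \<in> cAr D \<Longrightarrow> y \<in> cAr D \<Longrightarrow> Gm x = Gm y \<longleftrightarrow> x = y"
    using ba by (auto simp: bij_betw_def inj_on_def)
  note hh = h[unfolded hom_def]
  have h1: "\<And>x. x \<in> cOb D \<Longrightarrow> G x \<in> cOb C" using bo by (auto simp: bij_betw_def)
  have h2: "\<And>f. f \<in> cAr D \<Longrightarrow> Gm f \<in> cAr C" "\<And>f. f \<in> cAr D \<Longrightarrow> cdom C (Gm f) = G (cdom D f)"
     "\<And>f. f \<in> cAr D \<Longrightarrow> ccod C (Gm f) = G (ccod D f)" using hh by auto
  have h3: "\<And>f g. f \<in> cAr D \<Longrightarrow> g \<in> cAr D \<Longrightarrow> ccod D f = cdom D g \<Longrightarrow> ccomp C (Gm g) (Gm f) = Gm (ccomp D g f)"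
    using hh by auto
  have h4: "\<And>x. x \<in> cOb D \<Longrightarrow> cid C (G x) = Gm (cid D x)" using hh by auto
  have h5: "\<And>x y. x \<in> cOb D \<Longrightarrow> y \<in> cOb D \<Longrightarrow> tob C (G x) (G y) = G (tob D x y)" using hh by auto
  have h6: "\<And>f g. f \<in> cAr D \<Longrightarrow> g \<in> cAr D \<Longrightarrow> tar C (Gm f) (Gm g) = Gm (tar D f g)" using hh by auto
  have h7: "unt C = G (unt D)" using hh by auto
  note Dd = D[unfolded strict_2group_def strict_monoidal_def groupoid_def category_def is_iso_def arr_in_def]
  have cat: "category C"
    unfolding category_def arr_in_def obC arC
    using Dd by (auto simp: h2 h3 h4 injo)
  have "groupoid C"
    unfolding groupoid_def
  proof (intro conjI cat ballI)
    fix f' assume "f' \<in> cAr C"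
    then obtain f where f: "f \<in> cAr D" and ff: "f' = Gm f" using arC by auto
    then obtain g where g: "g \<in> cAr D" "cdom D g = ccod D f" "ccod D g = cdom D f"
       "ccomp D g f = cid D (cdom D f)" "ccomp D f g = cid D (ccod D f)" using Dd by metis
    have "cdom D f \<in> cOb D" "ccod D f \<in> cOb D" using f Dd by auto
    then show "is_iso C f'" unfolding is_iso_def arr_in_def ff
      apply (intro conjI exI[of _ "Gm g"])
      using f g by (auto simp: h2 h3 h4)
  qed
  moreover have "strict_monoidal C"
    unfolding strict_monoidal_def arr_in_def obC arC
    using Dd cat by (auto simp: h2 h3 h4 h5 h6 h7 injo)
  moreover have "\<forall>x\<in>cOb C. \<exists>y\<in>cOb C. (\<exists>f. arr_in C f (tob C x y) (unt C))
                            \<and> (\<exists>g. arr_in C g (tob C y x) (unt C))"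
  proof (auto simp: obC)
    fix x assume x: "x \<in> cOb D"
    then obtain y f g where y: "y \<in> cOb D" "arr_in D f (tob D x y) (unt D)" "arr_in D g (tob D y x) (unt D)"
      using D unfolding strict_2group_def by metis
    show "\<exists>y\<in>cOb D. (\<exists>f. arr_in C f (tob C (G x) (G y)) (unt C)) \<and> (\<exists>g. arr_in C g (tob C (G y) (G x)) (unt C))"
      apply (rule bexI[OF _ y(1)])
      apply (rule conjI)
       apply (rule exI[of _ "Gm f"])
      using x y apply (auto simp: arr_in_def h2 h5 h7)[1]
      apply (rule exI[of _ "Gm g"])
      using x y by (auto simp: arr_in_def h2 h5 h7)
  qed
  ultimately show ?thesis unfolding strict_2group_def by blast
qed

lemma cat_facts:
  assumes "category C"
  shows "\<And>x. x \<in> cOb C \<Longrightarrow> cid C x \<in> cAr C"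
    "\<And>x. x \<in> cOb C \<Longrightarrow> cdom C (cid C x) = x"
    "\<And>x. x \<in> cOb C \<Longrightarrow> ccod C (cid C x) = x"
    "\<And>f. f \<in> cAr C \<Longrightarrow> ccomp C (cid C (ccod C f)) f = f"
    "\<And>f. f \<in> cAr C \<Longrightarrow> ccomp C f (cid C (cdom C f)) = f"
    "\<And>f. f \<in> cAr C \<Longrightarrow> cdom C f \<in> cOb C"
    "\<And>f. f \<in> cAr C \<Longrightarrow> ccod C f \<in> cOb C"
  using assms unfolding category_def arr_in_def by auto

lemma cid_cid:
  assumes "category C" "x \<in> cOb C"
  shows "ccomp C (cid C x) (cid C x) = cid C x"
  using cat_facts[OF assms(1)] assms(2) by metis

lemma cid_iso:
  assumes "category C" "x \<in> cOb C"
  shows "is_iso C (cid C x)"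
  unfolding is_iso_def arr_in_def
  using cat_facts[OF assms(1)] assms(2) cid_cid[OF assms] by metis

lemma hom_mon_functor:
  assumes C: "strict_monoidal C" and D: "strict_monoidal D" and h: "hom C D F Fm"
  shows "mon_functor C D F Fm (\<lambda>x y. cid D (tob D (F x) (F y))) (cid D (unt D))"
proof -
  note hh = h[unfolded hom_def]
  note Cd = C[unfolded strict_monoidal_def arr_in_def]
  note Dd = D[unfolded strict_monoidal_def arr_in_def]
  have cC: "category C" and cD: "category D" using C D unfolding strict_monoidal_def by auto
  note fC = cat_facts[OF cC] and fD = cat_facts[OF cD]
  have fn: "functor C D F Fm" unfolding functor_def arr_in_def using hh by auto
  have tobC: "\<And>x y. x \<in> cOb C \<Longrightarrow> y \<in> cOb C \<Longrightarrow> tob C x y \<in> cOb C" using Cd by auto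
  have tobD: "\<And>x y. x \<in> cOb D \<Longrightarrow> y \<in> cOb D \<Longrightarrow> tob D x y \<in> cOb D" using Dd by auto
  have FO: "\<And>x. x \<in> cOb C \<Longrightarrow> F x \<in> cOb D" using hh by auto
  have Ftob: "\<And>x y. x \<in> cOb C \<Longrightarrow> y \<in> cOb C \<Longrightarrow> F (tob C x y) = tob D (F x) (F y)" using hh by auto
  have Fm: "\<And>f. f \<in> cAr C \<Longrightarrow> Fm f \<in> cAr D \<and> cdom D (Fm f) = F (cdom C f) \<and> ccod D (Fm f) = F (ccod C f)"
    using hh by auto
  have Ftar: "\<And>f g. f \<in> cAr C \<Longrightarrow> g \<in> cAr C \<Longrightarrow> Fm (tar C f g) = tar D (Fm f) (Fm g)" using hh by auto
  have tarD: "\<And>f g. f \<in> cAr D \<Longrightarrow> g \<in> cAr D \<Longrightarrow> tar D f g \<in> cAr D \<and> cdom D (tar D f g) = tob D (cdom D f) (cdom D g) \<and> ccod D (tar D f g) = tob D (ccod D f) (ccod D g)"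
    using Dd by auto
  have tarid: "\<And>x y. x \<in> cOb D \<Longrightarrow> y \<in> cOb D \<Longrightarrow> tar D (cid D x) (cid D y) = cid D (tob D x y)" using Dd by auto
  have uD: "unt D \<in> cOb D" and uF: "F (unt C) = unt D" using Dd hh by auto
  have assD: "\<And>x y z. x \<in> cOb D \<Longrightarrow> y \<in> cOb D \<Longrightarrow> z \<in> cOb D \<Longrightarrow> tob D (tob D x y) z = tob D x (tob D y z)" using Dd by auto
  have unD: "\<And>x. x \<in> cOb D \<Longrightarrow> tob D (unt D) x = x \<and> tob D x (unt D) = x" using Dd by auto
  show ?thesis
    unfolding mon_functor_def
  proof (intro conjI ballI)
    show "functor C D F Fm" by (rule fn)
    fix x y assume x: "x \<in> cOb C" and y: "y \<in> cOb C"
    show "arr_in D (cid D (tob D (F x) (F y))) (tob D (F x) (F y)) (F (tob C x y))"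
      unfolding arr_in_def using x y FO Ftob tobD fD by auto
    show "is_iso D (cid D (tob D (F x) (F y)))" using x y FO tobD cid_iso[OF cD] by auto
  next
    show "arr_in D (cid D (unt D)) (unt D) (F (unt C))" unfolding arr_in_def using uD uF fD by auto
    show "is_iso D (cid D (unt D))" using cid_iso[OF cD uD] .
  next
    fix f g assume f: "f \<in> cAr C" and g: "g \<in> cAr C"
    have a: "tar D (Fm f) (Fm g) \<in> cAr D" using Fm[OF f] Fm[OF g] tarD by blast
    have d: "cdom D (tar D (Fm f) (Fm g)) = tob D (F (cdom C f)) (F (cdom C g))"
         "ccod D (tar D (Fm f) (Fm g)) = tob D (F (ccod C f)) (F (ccod C g))"
      using Fm[OF f] Fm[OF g] tarD by auto
    show "ccomp D (Fm (tar C f g)) (cid D (tob D (F (cdom C f)) (F (cdom C g)))) =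
          ccomp D (cid D (tob D (F (ccod C f)) (F (ccod C g)))) (tar D (Fm f) (Fm g))"
      using fD(4,5)[OF a] unfolding d Ftar[OF f g] by simp
  next
    fix x y z assume x: "x \<in> cOb C" and y: "y \<in> cOb C" and z: "z \<in> cOb C"
    show "ccomp D (cid D (tob D (F (tob C x y)) (F z))) (tar D (cid D (tob D (F x) (F y))) (cid D (F z))) =
          ccomp D (cid D (tob D (F x) (F (tob C y z)))) (tar D (cid D (F x)) (cid D (tob D (F y) (F z))))"
      using x y z FO tobD by (simp add: Ftob tarid cid_cid[OF cD] assD)
  next
    fix x assume x: "x \<in> cOb C"
    show "ccomp D (cid D (tob D (F (unt C)) (F x))) (tar D (cid D (unt D)) (cid D (F x))) = cid D (F x)"
      using x FO uD by (simp add: uF tarid unD cid_cid[OF cD])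
    show "ccomp D (cid D (tob D (F x) (F (unt C)))) (tar D (cid D (F x)) (cid D (unt D))) = cid D (F x)"
      using x FO uD by (simp add: uF tarid unD cid_cid[OF cD])
  qed
qed

lemma hom_mon_nat_iso:
  assumes C: "strict_monoidal C" and D: "strict_monoidal D" and h: "hom C D F Fm" and h': "hom D C G Gm"
    and inv1: "\<And>x. x \<in> cOb C \<Longrightarrow> G (F x) = x" and inv2: "\<And>f. f \<in> cAr C \<Longrightarrow> Gm (Fm f) = f"
  shows "mon_nat_iso C C (G \<circ> F) (Gm \<circ> Fm)
            (\<lambda>x y. ccomp C (Gm (cid D (tob D (F x) (F y)))) (cid C (tob C (G (F x)) (G (F y)))))
            (ccomp C (Gm (cid D (unt D))) (cid C (unt C)))
            id id (\<lambda>x y. cid C (tob C x y)) (cid C (unt C)) (\<lambda>x. cid C x)"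
proof -
  note hh = h[unfolded hom_def] and hh' = h'[unfolded hom_def]
  note Cd = C[unfolded strict_monoidal_def arr_in_def]
  have cC: "category C" and cD: "category D" using C D unfolding strict_monoidal_def by auto
  note fC = cat_facts[OF cC]
  have tobC: "\<And>x y. x \<in> cOb C \<Longrightarrow> y \<in> cOb C \<Longrightarrow> tob C x y \<in> cOb C" using Cd by auto
  have tarid: "\<And>x y. x \<in> cOb C \<Longrightarrow> y \<in> cOb C \<Longrightarrow> tar C (cid C x) (cid C y) = cid C (tob C x y)" using Cd by auto
  have uC: "unt C \<in> cOb C" using Cd by auto
  have FO: "\<And>x. x \<in> cOb C \<Longrightarrow> F x \<in> cOb D" using hh by auto
  have Ftob: "\<And>x y. x \<in> cOb C \<Longrightarrow> y \<in> cOb C \<Longrightarrow> F (tob C x y) = tob D (F x) (F y)" using hh by auto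
  have Gcid: "\<And>x. x \<in> cOb D \<Longrightarrow> Gm (cid D x) = cid C (G x)" using hh' by auto
  have uF: "F (unt C) = unt D" using hh by auto
  show ?thesis
    unfolding mon_nat_iso_def nat_iso_def nat_trans_def
  proof (intro conjI ballI)
    fix x assume x: "x \<in> cOb C"
    show "arr_in C (cid C x) ((G \<circ> F) x) (id x)" using x fC inv1 by (auto simp: arr_in_def)
    show "is_iso C (cid C x)" by (rule cid_iso[OF cC x])
  next
    fix f assume f: "f \<in> cAr C"
    show "ccomp C (cid C (ccod C f)) ((Gm \<circ> Fm) f) = ccomp C (id f) (cid C (cdom C f))"
      using f fC inv2 by simp
  next
    fix x y assume x: "x \<in> cOb C" and y: "y \<in> cOb C"
    have e: "Gm (cid D (tob D (F x) (F y))) = cid C (tob C x y)"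
      using x y by (simp add: Ftob[symmetric] Gcid FO tobC inv1)
    show "ccomp C (cid C (tob C x y)) (ccomp C (Gm (cid D (tob D (F x) (F y)))) (cid C (tob C (G (F x)) (G (F y))))) =
          ccomp C (cid C (tob C x y)) (tar C (cid C x) (cid C y))"
      unfolding e using x y by (simp add: inv1 tarid cid_cid[OF cC] tobC)
  next
    show "ccomp C (cid C (unt C)) (ccomp C (Gm (cid D (unt D))) (cid C (unt C))) = cid C (unt C)"
      using uC by (simp add: uF[symmetric] Gcid FO inv1 cid_cid[OF cC])
  qed
qed

lemma iso_equiv:
  assumes C: "strict_2group C" and D: "strict_2group D" and h: "hom C D F Fm" and h': "hom D C G Gm"
    and inv1: "\<And>x. x \<in> cOb C \<Longrightarrow> G (F x) = x" and inv2: "\<And>f. f \<in> cAr C \<Longrightarrow> Gm (Fm f) = f"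
    and inv3: "\<And>x. x \<in> cOb D \<Longrightarrow> F (G x) = x" and inv4: "\<And>f. f \<in> cAr D \<Longrightarrow> Fm (Gm f) = f"
  shows "equiv_2group C D"
proof -
  have C': "strict_monoidal C" and D': "strict_monoidal D" using C D unfolding strict_2group_def by auto
  show ?thesis unfolding equiv_2group_def
    apply (intro conjI C D exI)
       apply (rule hom_mon_functor[OF C' D' h])
      apply (rule hom_mon_functor[OF D' C' h'])
     apply (rule hom_mon_nat_iso[OF C' D' h h'])
    using inv1 inv2 apply auto[2]
    apply (rule hom_mon_nat_iso[OF D' C' h' h])
    using inv3 inv4 by auto
qed

lemma bij_equiv:
  assumes D: "strict_2group D" and h: "hom D C G Gm"
    and bo: "bij_betw G (cOb D) (cOb C)" and ba: "bij_betw Gm (cAr D) (cAr C)"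
  shows "equiv_2group C D"
proof -
  have C: "strict_2group C" by (rule transport[OF D h bo ba])
  define F where "F = inv_into (cOb D) G"
  define Fm where "Fm = inv_into (cAr D) Gm"
  have i1: "\<And>x. x \<in> cOb C \<Longrightarrow> G (F x) = x" unfolding F_def using bo
    by (meson bij_betw_inv_into_right)
  have i2: "\<And>f. f \<in> cAr C \<Longrightarrow> Gm (Fm f) = f" unfolding Fm_def using ba
    by (meson bij_betw_inv_into_right)
  have i3: "\<And>x. x \<in> cOb D \<Longrightarrow> F (G x) = x" unfolding F_def using bo
    by (meson bij_betw_inv_into_left)
  have i4: "\<And>f. f \<in> cAr D \<Longrightarrow> Fm (Gm f) = f" unfolding Fm_def using ba
    by (meson bij_betw_inv_into_left)
  have m1: "\<And>x. x \<in> cOb C \<Longrightarrow> F x \<in> cOb D" unfolding F_def using bo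
    by (metis bij_betw_def inv_into_into)
  have m2: "\<And>f. f \<in> cAr C \<Longrightarrow> Fm f \<in> cAr D" unfolding Fm_def using ba
    by (metis bij_betw_def inv_into_into)
  note hh = h[unfolded hom_def]
  have D': "strict_monoidal D" using D unfolding strict_2group_def by auto
  note Dd = D'[unfolded strict_monoidal_def category_def arr_in_def]
  have h': "hom C D F Fm"
    unfolding hom_def
  proof (intro conjI ballI impI)
    fix x assume "x \<in> cOb C" then show "F x \<in> cOb D" by (rule m1)
  next
    fix f assume f: "f \<in> cAr C"
    show "Fm f \<in> cAr D" using m2 f .
    have "cdom D (Fm f) \<in> cOb D" "ccod D (Fm f) \<in> cOb D" using Dd m2[OF f] by auto
    moreover have "G (cdom D (Fm f)) = cdom C f" "G (ccod D (Fm f)) = ccod C f"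
      using hh m2[OF f] i2[OF f] by metis+
    ultimately show "cdom D (Fm f) = F (cdom C f)" "ccod D (Fm f) = F (ccod C f)" using i3 by metis+
  next
    fix f g assume f: "f \<in> cAr C" and g: "g \<in> cAr C" and fg: "ccod C f = cdom C g"
    have a: "ccod D (Fm f) \<in> cOb D" "cdom D (Fm g) \<in> cOb D" using Dd m2 f g by auto
    have "G (ccod D (Fm f)) = G (cdom D (Fm g))" using hh m2 f g i2 fg by metis
    then have c: "ccod D (Fm f) = cdom D (Fm g)" using a i3 by metis
    have "ccomp D (Fm g) (Fm f) \<in> cAr D" using Dd m2 f g c by auto
    moreover have "Gm (ccomp D (Fm g) (Fm f)) = ccomp C g f" using hh m2 f g c i2 by metis
    ultimately show "Fm (ccomp C g f) = ccomp D (Fm g) (Fm f)" using i4 by metis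
  next
    fix x assume x: "x \<in> cOb C"
    have "cid D (F x) \<in> cAr D" using Dd m1 x by auto
    moreover have "Gm (cid D (F x)) = cid C x" using hh m1 x i1 by metis
    ultimately show "Fm (cid C x) = cid D (F x)" using i4 by metis
  next
    fix x y assume x: "x \<in> cOb C" and y: "y \<in> cOb C"
    have "tob D (F x) (F y) \<in> cOb D" using Dd m1 x y by auto
    moreover have "G (tob D (F x) (F y)) = tob C x y" using hh m1 x y i1 by metis
    ultimately show "F (tob C x y) = tob D (F x) (F y)" using i3 by metis
  next
    fix f g assume f: "f \<in> cAr C" and g: "g \<in> cAr C"
    have "tar D (Fm f) (Fm g) \<in> cAr D" using Dd m2 f g by auto
    moreover have "Gm (tar D (Fm f) (Fm g)) = tar C f g" using hh m2 f g i2 by metis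
    ultimately show "Fm (tar C f g) = tar D (Fm f) (Fm g)" using i4 by metis
  next
    show "F (unt C) = unt D" using hh i3 Dd by metis
  qed
  show ?thesis by (rule iso_equiv[OF C D h' h i1 i2 i3 i4])
qed



lemma Aut_add: "\<phi> \<in> Aut \<Longrightarrow> \<phi> (x + y) = \<phi> x + \<phi> y"
  unfolding Aut_def by auto
lemma Aut_zero: "\<phi> \<in> Aut \<Longrightarrow> \<phi> 0 = 0"
proof -
  assume a: "\<phi> \<in> Aut"
  have "\<phi> (0 + 0) = \<phi> 0 + \<phi> 0" by (rule Aut_add[OF a])
  then show ?thesis by simp
qed
lemma Aut_bij: "\<phi> \<in> Aut \<Longrightarrow> bij \<phi>" unfolding Aut_def by auto
lemma Aut_id: "id \<in> Aut" unfolding Aut_def by auto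
lemma Aut_comp: "\<phi> \<in> Aut \<Longrightarrow> \<psi> \<in> Aut \<Longrightarrow> \<phi> \<circ> \<psi> \<in> Aut"
  unfolding Aut_def by (auto intro: bij_comp)
lemma Aut_inv: "\<phi> \<in> Aut \<Longrightarrow> inv \<phi> \<in> Aut"
proof -
  assume a: "\<phi> \<in> Aut"
  then have b: "bij \<phi>" by (rule Aut_bij)
  have "inv \<phi> (x + y) = inv \<phi> x + inv \<phi> y" for x y
  proof -
    have "\<phi> (inv \<phi> x + inv \<phi> y) = x + y" using Aut_add[OF a] b by (simp add: bij_is_surj surj_f_inv_f)
    then show ?thesis using b by (metis bij_inv_eq_iff)
  qed
  then show ?thesis unfolding Aut_def using b by (simp add: bij_imp_bij_inv)
qed
lemma Aut_inv_l: "\<phi> \<in> Aut \<Longrightarrow> inv \<phi> (\<phi> x) = x" using Aut_bij by (metis bij_inv_eq_iff)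
lemma Aut_inv_r: "\<phi> \<in> Aut \<Longrightarrow> \<phi> (inv \<phi> x) = x" using Aut_bij by (metis bij_inv_eq_iff)

lemma wc_iff: "(\<sigma>, h) \<in> wreath_car n Aut id \<longleftrightarrow> \<sigma> permutes {..<n} \<and> (\<forall>i<n. h i \<in> Aut) \<and> (\<forall>i\<ge>n. h i = id)"
  unfolding wreath_car_def by auto

lemma perm_lt: "\<sigma> permutes {..<n} \<Longrightarrow> \<sigma> i < n \<longleftrightarrow> i < n"
  using permutes_in_image[of \<sigma> "{..<n}" i] by simp
lemma perm_ge: "\<sigma> permutes {..<n} \<Longrightarrow> \<not> i < n \<Longrightarrow> \<sigma> i = i"
  using permutes_not_in[of \<sigma> "{..<n}" i] by simp
lemma perm_inv_lt: "\<sigma> permutes {..<n} \<Longrightarrow> inv \<sigma> i < n \<longleftrightarrow> i < n"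
  using perm_lt[OF permutes_inv] by blast

lemma wm: "wreath_mult (\<circ>) (\<sigma>, h) (\<sigma>', h') = (\<sigma> \<circ> \<sigma>', \<lambda>i. h (\<sigma>' i) \<circ> h' i)"
  unfolding wreath_mult_def by simp

lemma wm_car: "(\<sigma>, h) \<in> wreath_car n Aut id \<Longrightarrow> (\<sigma>', h') \<in> wreath_car n Aut id \<Longrightarrow>
   (\<sigma> \<circ> \<sigma>', \<lambda>i. h (\<sigma>' i) \<circ> h' i) \<in> wreath_car n Aut id"
proof -
  assume a: "(\<sigma>, h) \<in> wreath_car n Aut id" "(\<sigma>', h') \<in> wreath_car n Aut id"
  then have p: "\<sigma> permutes {..<n}" "\<sigma>' permutes {..<n}" and hh: "\<forall>i<n. h i \<in> Aut" "\<forall>i\<ge>n. h i = id"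
    "\<forall>i<n. h' i \<in> Aut" "\<forall>i\<ge>n. h' i = id" unfolding wc_iff by auto
  have "h (\<sigma>' i) \<circ> h' i \<in> Aut" if "i < n" for i
    using that hh perm_lt[OF p(2)] by (auto intro: Aut_comp)
  moreover have "h (\<sigma>' i) \<circ> h' i = id" if "i \<ge> n" for i
    using that hh perm_ge[OF p(2), of i] by auto
  ultimately show ?thesis unfolding wc_iff using p by (auto intro: permutes_compose)
qed

lemma wa: "wreath_act n (\<sigma>, h) a = (\<lambda>i. if i < n then h (inv \<sigma> i) (a (inv \<sigma> i)) else 0)"
  unfolding wreath_act_def by (rule ext) simp

lemma pc_iff: "a \<in> power_car n \<longleftrightarrow> (\<forall>i\<ge>n. a i = 0)" unfolding power_car_def by simp

lemma wa_pc: "wreath_act n g a \<in> power_car n" unfolding wreath_act_def power_car_def by auto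

lemma wa_add: "(\<sigma>, h) \<in> wreath_car n Aut id \<Longrightarrow>
   wreath_act n (\<sigma>, h) (\<lambda>i. a i + b i) = (\<lambda>i. wreath_act n (\<sigma>, h) a i + wreath_act n (\<sigma>, h) b i)"
  unfolding wa wc_iff by (auto simp: perm_inv_lt Aut_add)

lemma wa_zero: "(\<sigma>, h) \<in> wreath_car n Aut id \<Longrightarrow> wreath_act n (\<sigma>, h) (\<lambda>i. 0) = (\<lambda>i. 0)"
  unfolding wa wc_iff by (auto simp: perm_inv_lt Aut_zero)

lemma wa_unit: "a \<in> power_car n \<Longrightarrow> wreath_act n (id, \<lambda>i. id) a = a"
  unfolding wa pc_iff by (auto simp: inv_id)

lemma wa_comp: "(\<sigma>, h) \<in> wreath_car n Aut id \<Longrightarrow> (\<sigma>', h') \<in> wreath_car n Aut id \<Longrightarrow>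
   wreath_act n (\<sigma> \<circ> \<sigma>', \<lambda>i. h (\<sigma>' i) \<circ> h' i) a = wreath_act n (\<sigma>, h) (wreath_act n (\<sigma>', h') a)"
proof -
  assume g: "(\<sigma>, h) \<in> wreath_car n Aut id" and g': "(\<sigma>', h') \<in> wreath_car n Aut id"
  then have p: "\<sigma> permutes {..<n}" and p': "\<sigma>' permutes {..<n}" unfolding wc_iff by auto
  have i: "inv (\<sigma> \<circ> \<sigma>') = inv \<sigma>' \<circ> inv \<sigma>"
    using o_inv_distrib[OF permutes_bij[OF p] permutes_bij[OF p']] .
  show ?thesis unfolding wa i
    by (auto simp: perm_inv_lt[OF p] perm_inv_lt[OF p'] permutes_inverses[OF p'])
qed

context
  fixes n :: nat and TY :: "'a::ab_group_add itself"
begin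

abbreviation "T \<equiv> target_2group n TYPE('a)"

lemma T_simps:
 "cOb T = wreath_car n Aut id"
 "cAr T = power_car n \<times> wreath_car n Aut id"
 "cdom T = snd" "ccod T = snd"
 "ccomp T (b',g') (b,g) = (\<lambda>i. b' i + b i, g)"
 "cid T g = (\<lambda>i. 0, g)"
 "tob T = wreath_mult (\<circ>)"
 "tar T (b,g) (b',g') = (\<lambda>i. b i + wreath_act n g b' i, wreath_mult (\<circ>) g g')"
 "unt T = (id, \<lambda>i. id)"
  unfolding target_2group_def semidirect_2group_def by simp_all

lemma pc_add: "a \<in> power_car n \<Longrightarrow> b \<in> power_car n \<Longrightarrow> (\<lambda>i. a i + b i) \<in> power_car n"
  unfolding pc_iff by simp
lemma pc_zero: "(\<lambda>i. 0) \<in> power_car n" unfolding pc_iff by simp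
lemma pc_neg: "a \<in> power_car n \<Longrightarrow> (\<lambda>i. - a i) \<in> power_car n" unfolding pc_iff by simp

lemma unit_car: "(id, \<lambda>i. id) \<in> wreath_car n Aut id"
  unfolding wc_iff by (auto simp: Aut_id permutes_id)

lemma T_cat: "category T"
  unfolding category_def arr_in_def T_simps
  by (auto simp: T_simps pc_add pc_zero add.assoc)

lemma T_grpd: "groupoid T"
  unfolding groupoid_def
proof (intro conjI T_cat ballI)
  fix f assume "f \<in> cAr T"
  then obtain b g where f: "f = (b, g)" "b \<in> power_car n" "g \<in> wreath_car n Aut id" by (auto simp: T_simps)
  show "is_iso T f" unfolding is_iso_def arr_in_def f
    by (rule conjI, simp add: T_simps f, rule exI[of _ "(\<lambda>i. - b i, g)"]) (simp add: T_simps f pc_neg)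
qed

lemma T_mon: "strict_monoidal T"
  unfolding strict_monoidal_def
proof (intro conjI T_cat ballI impI)
  show "unt T \<in> cOb T" by (simp add: T_simps unit_car)
next
  fix x y assume "x \<in> cOb T" "y \<in> cOb T"
  then show "tob T x y \<in> cOb T" by (cases x, cases y) (simp add: T_simps wm wm_car)
next
  fix f g assume "f \<in> cAr T" "g \<in> cAr T"
  then obtain b s h b' s' h' where f: "f = (b,(s,h))" "g = (b',(s',h'))" "b \<in> power_car n" "b' \<in> power_car n"
    "(s,h) \<in> wreath_car n Aut id" "(s',h') \<in> wreath_car n Aut id" by (auto simp: T_simps)
  show "arr_in T (tar T f g) (tob T (cdom T f) (cdom T g)) (tob T (ccod T f) (ccod T g))"
    unfolding arr_in_def f by (simp add: T_simps f wm wm_car pc_add wa_pc)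
next
  fix x y assume "x \<in> cOb T" "y \<in> cOb T"
  then show "tar T (cid T x) (cid T y) = cid T (tob T x y)"
    by (cases x, cases y) (simp add: T_simps wa_zero)
next
  fix f f' g g' assume "f \<in> cAr T" "f' \<in> cAr T" "g \<in> cAr T" "g' \<in> cAr T"
    and c: "ccod T f = cdom T f'" "ccod T g = cdom T g'"
  then obtain b s h b' b2 s2 h2 b2' where f: "f = (b,(s,h))" "f' = (b',(s,h))" "g = (b2,(s2,h2))" "g' = (b2',(s2,h2))"
    "(s,h) \<in> wreath_car n Aut id" "(s2,h2) \<in> wreath_car n Aut id" by (auto simp: T_simps)
  show "tar T (ccomp T f' f) (ccomp T g' g) = ccomp T (tar T f' g') (tar T f g)"
    unfolding f by (simp add: T_simps wa_add f add_ac)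
next
  fix x y z assume "x \<in> cOb T" "y \<in> cOb T" "z \<in> cOb T"
  then show "tob T (tob T x y) z = tob T x (tob T y z)"
    by (cases x, cases y, cases z) (simp add: T_simps wm comp_assoc)
next
  fix f g k assume "f \<in> cAr T" "g \<in> cAr T" "k \<in> cAr T"
  then obtain b s h b' s' h' b2 s2 h2 where f: "f = (b,(s,h))" "g = (b',(s',h'))" "k = (b2,(s2,h2))"
    "(s,h) \<in> wreath_car n Aut id" "(s',h') \<in> wreath_car n Aut id" "(s2,h2) \<in> wreath_car n Aut id"
    by (auto simp: T_simps)
  show "tar T (tar T f g) k = tar T f (tar T g k)"
    unfolding f by (simp add: T_simps wm wa_add wa_comp f add.assoc o_assoc)
next
  fix x assume "x \<in> cOb T"
  then show "tob T (unt T) x = x" "tob T x (unt T) = x"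
    by (cases x, simp add: T_simps wm)+
next
  fix f assume "f \<in> cAr T"
  then obtain b s h where f: "f = (b,(s,h))" "b \<in> power_car n" "(s,h) \<in> wreath_car n Aut id"
    by (auto simp: T_simps)
  show "tar T (cid T (unt T)) f = f" "tar T f (cid T (unt T)) = f"
    unfolding f by (simp add: T_simps wm wa_unit wa_zero f)+
qed

lemma T_2group: "strict_2group T"
  unfolding strict_2group_def
proof (intro conjI T_mon T_grpd ballI)
  fix x assume "x \<in> cOb T"
  then obtain s h where x: "x = (s,h)" and p: "s permutes {..<n}" and hA: "\<forall>i<n. h i \<in> Aut" and hid: "\<forall>i\<ge>n. h i = id"
    by (cases x) (auto simp: T_simps wc_iff)
  have hb: "bij (h i)" for i using hA hid Aut_bij[of "h i"] by (cases "i < n") auto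
  define y where "y = (inv s, \<lambda>i. inv (h (inv s i)))"
  have yc: "y \<in> cOb T" unfolding y_def T_simps wc_iff
  proof (intro conjI allI impI permutes_inv[OF p])
    fix i assume "i < n" then show "inv (h (inv s i)) \<in> Aut" using hA perm_inv_lt[OF p] Aut_inv by blast
  next
    fix i assume "n \<le> i" then show "inv (h (inv s i)) = id" using hid perm_ge[OF permutes_inv[OF p], of i] by simp
  qed
  have xy: "tob T x y = unt T" unfolding x y_def T_simps wm
    using permutes_inv_o[OF p] hb by (auto simp: fun_eq_iff bij_is_surj surj_f_inv_f)
  have yx: "tob T y x = unt T" unfolding x y_def T_simps wm
    using permutes_inv_o[OF p] hb by (auto simp: fun_eq_iff permutes_inverses[OF p] bij_is_inj inv_f_f)
  have u: "arr_in T (cid T (unt T)) (unt T) (unt T)" unfolding arr_in_def by (simp add: T_simps unit_car pc_zero)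
  show "\<exists>y\<in>cOb T. (\<exists>f. arr_in T f (tob T x y) (unt T)) \<and> (\<exists>g. arr_in T g (tob T y x) (unt T))"
    apply (rule bexI[OF _ yc]) unfolding xy yx using u by blast
qed

abbreviation "K \<equiv> (coprod_grpd n :: (nat, nat \<times> 'a) cat)"
abbreviation "S \<equiv> Sym K"

lemma K_simps: "cOb K = {..<n}" "cAr K = {f. fst f < n}" "cdom K = fst" "ccod K = fst"
  "ccomp K g f = (fst f, snd g + snd f)" "cid K i = (i, 0)"
  unfolding coprod_grpd_def by simp_all

lemma S_ob: "F \<in> cOb S \<longleftrightarrow> self_equiv K (fst F) (snd F)
               \<and> (\<forall>x. \<not> x < n \<longrightarrow> fst F x = undefined)
               \<and> (\<forall>f. \<not> fst f < n \<longrightarrow> snd F f = undefined)"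
  unfolding Sym_def by (simp add: K_simps)

lemma S_ar: "(F,G,\<alpha>) \<in> cAr S \<longleftrightarrow> F \<in> cOb S \<and> G \<in> cOb S
               \<and> nat_iso K K (fst F) (snd F) (fst G) (snd G) \<alpha>
               \<and> (\<forall>x. \<not> x < n \<longrightarrow> \<alpha> x = undefined)"
  unfolding S_ob unfolding Sym_def by (auto simp: K_simps)

lemma S_simps: "cdom S (F,G,\<alpha>) = F" "ccod S (F,G,\<alpha>) = G"
  "ccomp S (G',H,\<beta>) (F,G,\<alpha>) = (F, H, \<lambda>x. if x < n then ccomp K (\<beta> x) (\<alpha> x) else undefined)"
  "cid S F = (F, F, \<lambda>x. if x < n then (fst F x, 0) else undefined)"
  "tob S = fcomp K"
  "fcomp K F G = (\<lambda>x. if x < n then fst F (fst G x) else undefined, \<lambda>f. if fst f < n then snd F (snd G f) else undefined)"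
  "tar S (F,F',\<alpha>) (G,G',\<beta>) = (fcomp K F G, fcomp K F' G',
      \<lambda>x. if x < n then ccomp K (\<alpha> (fst G' x)) (snd F (\<beta> x)) else undefined)"
  "unt S = (\<lambda>x. if x < n then x else undefined, \<lambda>f. if fst f < n then f else undefined)"
  unfolding Sym_def fcomp_def by (simp_all add: K_simps cong: if_cong)

definition ginv :: "(nat \<Rightarrow> nat) \<times> (nat \<Rightarrow> 'a \<Rightarrow> 'a) \<Rightarrow> (nat \<Rightarrow> nat) \<times> (nat \<Rightarrow> 'a \<Rightarrow> 'a)" where
  "ginv g = (inv (fst g), \<lambda>i. inv (snd g (inv (fst g) i)))"

lemma ginv_facts:
  assumes g: "g \<in> wreath_car n (Aut :: ('a \<Rightarrow> 'a) set) id"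
  shows "ginv g \<in> wreath_car n Aut id" "wreath_mult (\<circ>) g (ginv g) = (id, \<lambda>i. id)"
    "wreath_mult (\<circ>) (ginv g) g = (id, \<lambda>i. id)"
proof -
  obtain s h where x: "g = (s,h)" and p: "s permutes {..<n}" and hA: "\<forall>i<n. h i \<in> Aut" and hid: "\<forall>i\<ge>n. h i = id"
    using g by (cases g) (auto simp: wc_iff)
  have hb: "bij (h i)" for i using hA hid Aut_bij[of "h i"] by (cases "i < n") auto
  show "ginv g \<in> wreath_car n Aut id" unfolding x ginv_def fst_conv snd_conv wc_iff
  proof (intro conjI allI impI permutes_inv[OF p])
    fix i assume "i < n" then show "inv (h (inv s i)) \<in> Aut" using hA perm_inv_lt[OF p] Aut_inv by blast
  next
    fix i assume "n \<le> i" then show "inv (h (inv s i)) = id" using hid perm_ge[OF permutes_inv[OF p], of i] by simp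
  qed
  show "wreath_mult (\<circ>) g (ginv g) = (id, \<lambda>i. id)" unfolding x ginv_def fst_conv snd_conv wm
    using permutes_inv_o[OF p] hb by (auto simp: fun_eq_iff bij_is_surj surj_f_inv_f)
  show "wreath_mult (\<circ>) (ginv g) g = (id, \<lambda>i. id)" unfolding x ginv_def fst_conv snd_conv wm
    using permutes_inv_o[OF p] hb by (auto simp: fun_eq_iff permutes_inverses[OF p] bij_is_inj inv_f_f)
qed

definition Go :: "(nat \<Rightarrow> nat) \<times> (nat \<Rightarrow> 'a \<Rightarrow> 'a) \<Rightarrow> (nat \<Rightarrow> nat) \<times> (nat \<times> 'a \<Rightarrow> nat \<times> 'a)" where
  "Go g = (\<lambda>x. if x < n then fst g x else undefined,
           \<lambda>f. if fst f < n then (fst g (fst f), snd g (fst f) (snd f)) else undefined)"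

definition Gm :: "(nat \<Rightarrow> 'a) \<times> ((nat \<Rightarrow> nat) \<times> (nat \<Rightarrow> 'a \<Rightarrow> 'a)) \<Rightarrow> _" where
  "Gm bg = (Go (snd bg), Go (snd bg), \<lambda>x. if x < n then (fst (snd bg) x, fst bg (fst (snd bg) x)) else undefined)"

lemma Go_tob:
  assumes g: "(s,h) \<in> wreath_car n Aut id" and g': "(s',h') \<in> wreath_car n Aut id"
  shows "fcomp K (Go (s,h)) (Go (s',h')) = Go (wreath_mult (\<circ>) (s,h) (s',h'))"
proof -
  have p: "s' permutes {..<n}" using g' by (simp add: wc_iff)
  show ?thesis unfolding S_simps Go_def wm
    by (auto simp: fun_eq_iff perm_lt[OF p])
qed

lemma Go_unt: "Go (id, \<lambda>i. id) = unt S"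
  unfolding S_simps Go_def by (auto simp: fun_eq_iff)

lemma nat_iso_idK:
  assumes "\<And>x. x < n \<Longrightarrow> Fo x = x" "\<And>f. fst f < n \<Longrightarrow> Fm f = f"
  shows "nat_iso K K Fo Fm id id (\<lambda>x. (x, 0))"
  unfolding nat_iso_def nat_trans_def is_iso_def arr_in_def K_simps
  using assms by auto

lemma Go_functor:
  assumes g: "(s,h) \<in> wreath_car n Aut id"
  shows "functor K K (fst (Go (s,h))) (snd (Go (s,h)))"
proof -
  have p: "s permutes {..<n}" and hA: "\<forall>i<n. h i \<in> Aut" using g by (auto simp: wc_iff)
  show ?thesis unfolding functor_def arr_in_def K_simps Go_def
    using hA by (auto simp: perm_lt[OF p] Aut_zero Aut_add)
qed

lemma comp_id_on:
  assumes g: "g \<in> wreath_car n Aut id" and g': "g' \<in> wreath_car n Aut id"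
    and e: "wreath_mult (\<circ>) g' g = (id, \<lambda>i. id)"
  shows "\<And>x. x < n \<Longrightarrow> (fst (Go g') \<circ> fst (Go g)) x = id x"
        "\<And>f. fst f < n \<Longrightarrow> (snd (Go g') \<circ> snd (Go g)) f = id f"
proof -
  obtain s h s' h' where gg: "g = (s,h)" "g' = (s',h')" by (cases g, cases g')
  have eq: "fcomp K (Go g') (Go g) = unt S" using Go_tob[of s' h' s h] g g' e unfolding gg
    by (simp add: Go_unt)
  fix x assume "x < n" then show "(fst (Go g') \<circ> fst (Go g)) x = id x"
    using arg_cong[OF eq, of "\<lambda>F. fst F x"] unfolding S_simps by simp
next
  obtain s h s' h' where gg: "g = (s,h)" "g' = (s',h')" by (cases g, cases g')
  have eq: "fcomp K (Go g') (Go g) = unt S" using Go_tob[of s' h' s h] g g' e unfolding gg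
    by (simp add: Go_unt)
  fix f :: "nat \<times> 'a" assume "fst f < n" then show "(snd (Go g') \<circ> snd (Go g)) f = id f"
    using arg_cong[OF eq, of "\<lambda>F. snd F f"] unfolding S_simps by simp
qed

lemma Go_ob:
  assumes g: "g \<in> wreath_car n Aut id"
  shows "Go g \<in> cOb S"
proof -
  have gi: "ginv g \<in> wreath_car n Aut id" using ginv_facts[OF g] by simp
  have "self_equiv K (fst (Go g)) (snd (Go g))"
    unfolding self_equiv_def
  proof (intro conjI exI)
    show "functor K K (fst (Go g)) (snd (Go g))" using Go_functor g by (cases g) simp
    show "functor K K (fst (Go (ginv g))) (snd (Go (ginv g)))" using Go_functor gi by (cases "ginv g") simp
    show "nat_iso K K (fst (Go (ginv g)) \<circ> fst (Go g)) (snd (Go (ginv g)) \<circ> snd (Go g)) id id (\<lambda>x. (x, 0))"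
      by (rule nat_iso_idK) (use comp_id_on[OF g gi ginv_facts(3)[OF g]] in auto)
    show "nat_iso K K (fst (Go g) \<circ> fst (Go (ginv g))) (snd (Go g) \<circ> snd (Go (ginv g))) id id (\<lambda>x. (x, 0))"
      by (rule nat_iso_idK) (use comp_id_on[OF gi g ginv_facts(2)[OF g]] in auto)
  qed
  then show ?thesis unfolding S_ob by (simp add: Go_def)
qed

lemma Gm_eq: "Gm (b,(s,h)) = (Go (s,h), Go (s,h), \<lambda>x. if x < n then (s x, b (s x)) else undefined)"
  unfolding Gm_def by (simp cong: if_cong)

lemma Gm_ar:
  assumes b: "b \<in> power_car n" and g: "(s,h) \<in> wreath_car n Aut id"
  shows "Gm (b,(s,h)) \<in> cAr S"
proof -
  have p: "s permutes {..<n}" and hA: "\<forall>i<n. h i \<in> Aut" using g by (auto simp: wc_iff)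
  have "nat_iso K K (fst (Go (s,h))) (snd (Go (s,h))) (fst (Go (s,h))) (snd (Go (s,h)))
          (\<lambda>x. if x < n then (s x, b (s x)) else undefined)"
    unfolding nat_iso_def nat_trans_def is_iso_def arr_in_def K_simps Go_def
    using perm_lt[OF p] by (auto simp: add.commute intro: exI[of _ "- b (s _)"])
  then show ?thesis unfolding Gm_eq S_ar using Go_ob g by simp
qed

lemma hom_TS: "hom T S Go Gm"
  unfolding hom_def
proof (intro conjI ballI impI)
  fix x assume "x \<in> cOb T" then show "Go x \<in> cOb S" using Go_ob by (simp add: T_simps)
next
  fix f assume "f \<in> cAr T"
  then obtain b s h where f: "f = (b,(s,h))" "b \<in> power_car n" "(s,h) \<in> wreath_car n Aut id"
    by (auto simp: T_simps)
  show "Gm f \<in> cAr S" using Gm_ar f by simp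
  show "cdom S (Gm f) = Go (cdom T f)" "ccod S (Gm f) = Go (ccod T f)"
    unfolding f Gm_eq by (simp_all add: S_simps T_simps)
next
  fix f g assume "f \<in> cAr T" "g \<in> cAr T" "ccod T f = cdom T g"
  then obtain b b' s h where f: "f = (b,(s,h))" "g = (b',(s,h))"
    by (auto simp: T_simps)
  show "Gm (ccomp T g f) = ccomp S (Gm g) (Gm f)"
    unfolding f T_simps Gm_eq S_simps by (auto simp: K_simps fun_eq_iff)
next
  fix x assume "x \<in> cOb T"
  then obtain s h where x: "x = (s,h)" by (cases x)
  show "Gm (cid T x) = cid S (Go x)"
    unfolding x T_simps Gm_eq S_simps by (auto simp: Go_def fun_eq_iff)
next
  fix x y assume "x \<in> cOb T" "y \<in> cOb T"
  then obtain s h s' h' where x: "x = (s,h)" "y = (s',h')" "(s,h) \<in> wreath_car n Aut id" "(s',h') \<in> wreath_car n Aut id"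
    by (cases x, cases y) (auto simp: T_simps)
  show "Go (tob T x y) = tob S (Go x) (Go y)"
    unfolding x(1,2) using Go_tob[OF x(3,4)] by (simp add: T_simps S_simps(5))
next
  fix f g assume "f \<in> cAr T" "g \<in> cAr T"
  then obtain b s h b' s' h' where f: "f = (b,(s,h))" "g = (b',(s',h'))"
    "(s,h) \<in> wreath_car n Aut id" "(s',h') \<in> wreath_car n Aut id"
    by (auto simp: T_simps)
  have p: "s permutes {..<n}" "s' permutes {..<n}" using f by (auto simp: wc_iff)
  have e: "fcomp K (Go (s,h)) (Go (s',h')) = Go (s \<circ> s', \<lambda>i. h (s' i) \<circ> h' i)"
    using Go_tob[OF f(3,4)] by (simp add: wm)
  show "Gm (tar T f g) = tar S (Gm f) (Gm g)"
    unfolding f(1,2) T_simps Gm_eq S_simps(7) e wm wa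
    by (auto simp: K_simps fun_eq_iff Go_def perm_lt[OF p(1)] perm_lt[OF p(2)] permutes_inverses[OF p(1)])
next
  show "Go (unt T) = unt S" by (simp add: T_simps Go_unt)
qed

lemma functorK:
  assumes "functor K K Fo Fm"
  shows "\<And>x. x < n \<Longrightarrow> Fo x < n"
    "\<And>i a. i < n \<Longrightarrow> Fm (i,a) = (Fo i, snd (Fm (i,a)))"
    "\<And>i a b. i < n \<Longrightarrow> snd (Fm (i, a + b)) = snd (Fm (i,a)) + snd (Fm (i,b))"
proof -
  note d = assms[unfolded functor_def arr_in_def K_simps]
  show "\<And>x. x < n \<Longrightarrow> Fo x < n" using d by auto
  show "\<And>i a. i < n \<Longrightarrow> Fm (i,a) = (Fo i, snd (Fm (i,a)))"
  proof -
    fix i a assume "i < n"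
    then have "fst (Fm (i,a)) = Fo i" using d by auto
    then show "Fm (i,a) = (Fo i, snd (Fm (i,a)))" by (metis prod.collapse)
  qed
  fix i a b assume i: "i < n"
  have "Fm (ccomp K (i,a) (i,b)) = ccomp K (Fm (i,a)) (Fm (i,b))"
    using d i by (auto simp: K_simps)
  then show "snd (Fm (i, a + b)) = snd (Fm (i,a)) + snd (Fm (i,b))" by (simp add: K_simps)
qed

lemma natisoK:
  assumes "nat_iso K K (Go' \<circ> Fo) (Gm' \<circ> Fm) id id \<alpha>"
  shows "\<And>x. x < n \<Longrightarrow> Go' (Fo x) = x" "\<And>i a. i < n \<Longrightarrow> snd (Gm' (Fm (i,a))) = a"
proof -
  note d = assms[unfolded nat_iso_def nat_trans_def arr_in_def K_simps]
  show "\<And>x. x < n \<Longrightarrow> Go' (Fo x) = x"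
  proof -
    fix x assume "x < n" then have "x \<in> {..<n}" by simp
    have d1: "\<forall>x\<in>cOb K. arr_in K (\<alpha> x) ((Go' \<circ> Fo) x) (id x)" using assms unfolding nat_iso_def nat_trans_def by blast
    from bspec[OF d1] \<open>x \<in> {..<n}\<close> show "Go' (Fo x) = x" by (simp add: arr_in_def K_simps) metis
  qed
  fix i a assume i: "i < n"
  then have "ccomp K (\<alpha> i) (Gm' (Fm (i,a))) = ccomp K (i,a) (\<alpha> i)" using d by (auto simp: K_simps)
  then show "snd (Gm' (Fm (i,a))) = a" by (simp add: K_simps add.commute)
qed

lemma S_ob_char:
  assumes F: "F \<in> cOb S"
  shows "\<exists>g\<in>wreath_car n Aut id. F = Go g"
proof -
  obtain Fo Fm where FF: "F = (Fo, Fm)" by (cases F)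
  have se: "self_equiv K Fo Fm" and eo: "\<And>x. \<not> x < n \<Longrightarrow> Fo x = undefined"
    and ea: "\<And>f. \<not> fst f < n \<Longrightarrow> Fm f = undefined" using F unfolding S_ob FF by auto
  obtain Go' Gm' \<alpha> \<beta> where fF: "functor K K Fo Fm" and fG: "functor K K Go' Gm'"
    and a: "nat_iso K K (Go' \<circ> Fo) (Gm' \<circ> Fm) id id \<alpha>"
    and b: "nat_iso K K (Fo \<circ> Go') (Fm \<circ> Gm') id id \<beta>"
    using se unfolding self_equiv_def by blast
  note F1 = functorK[OF fF] and G1 = functorK[OF fG] and A1 = natisoK[OF a] and B1 = natisoK[OF b]
  define s where "s x = (if x < n then Fo x else x)" for x
  define h where "h i = (if i < n then (\<lambda>a. snd (Fm (i,a))) else id)" for i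
  have sp: "s permutes {..<n}"
  proof (rule bij_imp_permutes)
    show "bij_betw s {..<n} {..<n}"
      by (rule bij_betw_byWitness[where f'=Go']) (auto simp: s_def F1 G1 A1 B1)
    show "\<And>x. x \<notin> {..<n} \<Longrightarrow> s x = x" by (simp add: s_def)
  qed
  have hA: "h i \<in> Aut" if i: "i < n" for i
  proof -
    define \<psi> where "\<psi> a = snd (Gm' (Fo i, a))" for a
    have 1: "h i (\<psi> a) = a" for a
    proof -
      have "Gm' (Fo i, a) = (i, \<psi> a)" using G1(2)[OF F1(1)[OF i], of a] A1(1)[OF i] \<psi>_def by simp
      then show ?thesis using B1(2)[OF F1(1)[OF i], of a] i by (simp add: h_def)
    qed
    have 2: "\<psi> (h i a) = a" for a
      using A1(2)[OF i, of a] F1(2)[OF i, of a] i by (simp add: h_def \<psi>_def)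
    have "bij (h i)" by (rule o_bij[of \<psi>]) (auto simp: 1 2 fun_eq_iff)
    moreover have "h i (x + y) = h i x + h i y" for x y using F1(3)[OF i] i by (simp add: h_def)
    ultimately show ?thesis unfolding Aut_def by blast
  qed
  have g: "(s,h) \<in> wreath_car n Aut id" unfolding wc_iff using sp hA by (simp add: h_def)
  have e1: "Fo = (\<lambda>x. if x < n then s x else undefined)"
    using eo by (auto simp: s_def fun_eq_iff)
  have e2: "Fm = (\<lambda>f. if fst f < n then (s (fst f), h (fst f) (snd f)) else undefined)"
  proof
    fix f :: "nat \<times> 'a" obtain i a where f: "f = (i,a)" by (cases f)
    show "Fm f = (if fst f < n then (s (fst f), h (fst f) (snd f)) else undefined)"
      using ea[of f] F1(2)[of i a] unfolding f by (simp add: s_def h_def)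
  qed
  have "F = Go (s,h)" unfolding FF Go_def e1 e2 by (simp cong: if_cong)
  then show ?thesis using g by blast
qed

lemma Go_inj:
  assumes g: "(s,h) \<in> wreath_car n Aut id" and g': "(s',h') \<in> wreath_car n Aut id"
    and e1: "\<And>x. x < n \<Longrightarrow> s x = s' x" and e2: "\<And>i a. i < n \<Longrightarrow> h i a = h' i a"
  shows "(s,h) = (s',h')"
proof -
  have p: "s permutes {..<n}" "s' permutes {..<n}" and hid: "\<forall>i\<ge>n. h i = id" "\<forall>i\<ge>n. h' i = id"
    using g g' by (auto simp: wc_iff)
  have "s = s'" using e1 perm_ge[OF p(1)] perm_ge[OF p(2)] by (metis ext)
  moreover have "h = h'" using e2 hid by (metis ext not_le)
  ultimately show ?thesis by simp
qed

lemma Go_inj_on: "inj_on Go (wreath_car n Aut id)"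
proof (rule inj_onI)
  fix g g' assume g: "g \<in> wreath_car n Aut id" and g': "g' \<in> wreath_car n Aut id" and e: "Go g = Go g'"
  obtain s h s' h' where gg: "g = (s,h)" "g' = (s',h')" by (cases g, cases g')
  have "s x = s' x" if "x < n" for x using arg_cong[OF e, of "\<lambda>F. fst F x"] that unfolding gg Go_def by simp
  moreover have "h i a = h' i a" if "i < n" for i a
    using arg_cong[OF e, of "\<lambda>F. snd F (i,a)"] that unfolding gg Go_def by simp
  ultimately show "g = g'" using Go_inj g g' unfolding gg by blast
qed

lemma S_ar_char:
  assumes f: "f \<in> cAr S"
  shows "\<exists>b\<in>power_car n. \<exists>g\<in>wreath_car n Aut id. f = Gm (b,g)"
proof -
  obtain F G \<alpha> where ff: "f = (F,G,\<alpha>)" by (cases f)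
  have F: "F \<in> cOb S" and G: "G \<in> cOb S" and ni: "nat_iso K K (fst F) (snd F) (fst G) (snd G) \<alpha>"
    and ea: "\<And>x. \<not> x < n \<Longrightarrow> \<alpha> x = undefined" using f unfolding ff S_ar by auto
  obtain s h where g: "(s,h) \<in> wreath_car n Aut id" and FF: "F = Go (s,h)" using S_ob_char[OF F] by auto
  obtain s' h' where g': "(s',h') \<in> wreath_car n Aut id" and GG: "G = Go (s',h')" using S_ob_char[OF G] by auto
  have p: "s permutes {..<n}" using g by (simp add: wc_iff)
  have d1: "\<forall>x\<in>cOb K. arr_in K (\<alpha> x) (fst F x) (fst G x)" using ni unfolding nat_iso_def nat_trans_def by blast
  have d2: "\<forall>f\<in>cAr K. ccomp K (\<alpha> (ccod K f)) (snd F f) = ccomp K (snd G f) (\<alpha> (cdom K f))"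
    using ni unfolding nat_iso_def nat_trans_def by blast
  have a1: "fst (\<alpha> x) = s x" "fst (\<alpha> x) = s' x" if "x < n" for x
    using bspec[OF d1, of x] that unfolding FF GG by (simp_all add: arr_in_def K_simps Go_def)
  have a2: "h i a = h' i a" if "i < n" for i a
    using bspec[OF d2, of "(i,a)"] that unfolding FF GG by (simp add: K_simps Go_def add.commute)
  have "(s,h) = (s',h')" by (rule Go_inj[OF g g']) (use a1 a2 in auto)
  then have GF: "G = F" unfolding FF GG by simp
  define b where "b j = (if j < n then snd (\<alpha> (inv s j)) else 0)" for j
  have b: "b \<in> power_car n" unfolding pc_iff b_def by simp
  have "\<alpha> = (\<lambda>x. if x < n then (s x, b (s x)) else undefined)"
  proof
    fix x show "\<alpha> x = (if x < n then (s x, b (s x)) else undefined)"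
      using ea[of x] a1(1)[of x] by (cases "x < n") (auto simp: b_def perm_lt[OF p] permutes_inverses[OF p] prod_eq_iff)
  qed
  then have "f = Gm (b,(s,h))" unfolding ff GF FF Gm_eq by simp
  then show ?thesis using b g by blast
qed

lemma Gm_inj_on: "inj_on Gm (cAr T)"
proof (rule inj_onI)
  fix f f' assume "f \<in> cAr T" "f' \<in> cAr T" and e: "Gm f = Gm f'"
  then obtain b s h b' s' h' where ff: "f = (b,(s,h))" "f' = (b',(s',h'))" and b: "b \<in> power_car n" "b' \<in> power_car n"
    and g: "(s,h) \<in> wreath_car n Aut id" "(s',h') \<in> wreath_car n Aut id" by (auto simp: T_simps)
  have "Go (s,h) = Go (s',h')" using e unfolding ff Gm_eq by simp
  then have gg: "(s,h) = (s',h')" using Go_inj_on g by (auto dest: inj_onD)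
  have p: "s permutes {..<n}" and p': "s' permutes {..<n}" using g by (simp_all add: wc_iff)
  have "b x = b' x" if "x < n" for x
  proof -
    have "inv s x < n" using that perm_inv_lt[OF p] by simp
    then show ?thesis using arg_cong[OF e, of "\<lambda>F. snd (snd (snd F) (inv s x))"] gg
      unfolding ff Gm_eq by (simp add: permutes_inverses[OF p] permutes_inverses[OF p'])
  qed
  then have "b = b'" using b unfolding pc_iff by (metis ext not_le)
  then show "f = f'" using ff gg by simp
qed

lemma bij_ob: "bij_betw Go (cOb T) (cOb S)"
  unfolding bij_betw_def T_simps
  using Go_inj_on Go_ob S_ob_char by blast

lemma bij_ar: "bij_betw Gm (cAr T) (cAr S)"
  unfolding bij_betw_def
proof (intro conjI Gm_inj_on)
  show "Gm ` cAr T = cAr S"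
  proof
    show "Gm ` cAr T \<subseteq> cAr S" using Gm_ar by (auto simp: T_simps)
    show "cAr S \<subseteq> Gm ` cAr T" using S_ar_char by (force simp: T_simps)
  qed
qed

lemma main_equiv: "equiv_2group S T"
  by (rule bij_equiv[OF T_2group hom_TS bij_ob bij_ar])

end


theorem proposition4p15:
  fixes n :: nat
  assumes "n \<ge> 1"
  shows "equiv_2group (Sym (coprod_grpd n :: (nat, nat \<times> 'a::ab_group_add) cat))
                      (target_2group n TYPE('a))"
  by (rule main_equiv)

end
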